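(* Let $a,b,c$ be distinct primes with $a<b$ and $N(a,b,c)>1$, with $(a,b,c)\notin\{(2,3,5),(2,3,11),(2,5,3),(2,7,3),(3,5,2),(3,13,2)\}$, and let the two solutions of $a^x+b^y=c^z$ be $(x_1,y_1,z_1)$, $(x_2,y_2,z_2)$ with $2\mid x_1$, $2\mid y_1$, $z_1=1$, $2\nmid y_2$. Suppose $b\equiv 13\pmod{24}$. If $c\equiv 5\pmod{24}$, then $x_1=2$. If $c\equiv 17\pmod{24}$, then $x_2=2$, so that $4+b^{y_2}=c^{z_2}$, with $y_2$ odd, $y_2>1$, $z_2$ odd and $z_2>1$.
   Context: $N(a,b,c)$ denotes the number of triples $(x,y,z)$ of positive integers with $a^x+b^y=c^z$. *)

theory Defs
  imports Main "HOL-Computational_Algebra.Primes"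
begin

definition sols :: "nat \<Rightarrow> nat \<Rightarrow> nat \<Rightarrow> (nat \<times> nat \<times> nat) set" where
  "sols a b c = {(x, y, z). x > 0 \<and> y > 0 \<and> z > 0 \<and> a ^ x + b ^ y = c ^ z}"

definition N :: "nat \<Rightarrow> nat \<Rightarrow> nat \<Rightarrow> nat" where
  "N a b c = card (sols a b c)"

end

theory Submission
  imports Defs "HOL-Number_Theory.Number_Theory"
begin


lemma lemL:
  fixes b p d :: nat
  assumes pp: "prime p" "2 < p" and pb: "prime b" "2 < b" "p \<noteq> b"
    and b4: "b mod 4 = 1" and od: "odd d" and cg: "[b ^ d = 1] (mod p)"
  shows "[p ^ ((b - 1) div 2) = 1] (mod b)"
proof -
  have "even (d + 1)" using od by simp
  then obtain k where dk: "d + 1 = 2 * k" by (rule evenE)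
  have "[b ^ d * b = 1 * b] (mod p)" using cg by (rule cong_scalar_right)
  moreover have "b ^ d * b = (b ^ k) ^ 2"
  proof -
    have "b ^ d * b = b ^ (d + 1)" by simp
    also have "\<dots> = b ^ (2 * k)" using dk by simp
    also have "\<dots> = (b ^ k) ^ 2" by (simp add: power_mult mult.commute)
    finally show ?thesis .
  qed
  ultimately have "[(b ^ k) ^ 2 = b] (mod p)" by simp
  then have q: "[int (b ^ k) ^ 2 = int b] (mod int p)"
    by (metis cong_int_iff of_nat_power)
  have nz: "\<not> [int b = 0] (mod int p)"
  proof
    assume "[int b = 0] (mod int p)"
    then have "p dvd b" by (metis cong_0_iff int_dvd_int_iff)
    then have "p = b" by (rule primes_dvd_imp_eq[OF pp(1) pb(1)])
    then show False using pb(3) by simp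
  qed
  have L1: "Legendre (int b) (int p) = 1"
    unfolding Legendre_def QuadRes_def using nz q by auto
  have ev: "even ((b - 1) div 2)"
    using b4 by presburger
  have "Legendre (int p) (int b) * Legendre (int b) (int p) = (-1::int) ^ ((p - 1) div 2 * ((b - 1) div 2))"
    by (rule Quadratic_Reciprocity) (use pp pb in auto)
  also have "\<dots> = 1"
  proof -
    have "even ((p - 1) div 2 * ((b - 1) div 2))" using ev by simp
    then show ?thesis by (rule neg_one_even_power)
  qed
  finally have L2: "Legendre (int p) (int b) = 1" using L1 by simp
  have "[Legendre (int p) (int b) = int p ^ ((b - 1) div 2)] (mod int b)"
    using euler_criterion[OF pb(1) pb(2)] by simp
  then have "[int 1 = int (p ^ ((b - 1) div 2))] (mod int b)" using L2 by simp
  then show ?thesis by (metis cong_int_iff cong_sym)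
qed

lemma lemM:
  fixes b d :: nat
  assumes pb: "prime b" "2 < b" and b4: "b mod 4 = 1" and od: "odd d"
  shows "m > 0 \<Longrightarrow> odd m \<Longrightarrow> coprime m b \<Longrightarrow> [b ^ d = 1] (mod m) \<Longrightarrow> [m ^ ((b - 1) div 2) = 1] (mod b)"
proof (induction m rule: less_induct)
  case (less m)
  show ?case
  proof (cases "m = 1")
    case True then show ?thesis by simp
  next
    case False
    then obtain p where p: "prime p" "p dvd m" using prime_factor_nat[OF False] by blast
    then obtain k where mk: "m = p * k" by blast
    have "p \<noteq> 2" using p less.prems(2) by auto
    then have p2: "2 < p" using prime_ge_2_nat[OF p(1)] by linarith
    have pnb: "p \<noteq> b"
    proof
      assume "p = b"
      then have "p = 1" using coprime_common_divisor_nat[OF less.prems(3) p(2)] by simp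
      then show False using p(1) by simp
    qed
    have cp: "[b ^ d = 1] (mod p)" using less.prems(4) p(2) by (rule cong_dvd_modulus_nat)
    have A: "[p ^ ((b - 1) div 2) = 1] (mod b)" by (rule lemL[OF p(1) p2 pb pnb b4 od cp])
    have kpos: "k > 0" using mk less.prems(1) by auto
    have klt: "k < m" using mk p2 kpos by simp
    have B: "[k ^ ((b - 1) div 2) = 1] (mod b)"
    proof (rule less.IH[OF klt kpos])
      show "odd k" using less.prems(2) mk by simp
      show "coprime k b" using less.prems(3) mk by simp
      show "[b ^ d = 1] (mod k)" by (rule cong_dvd_modulus_nat[OF less.prems(4)]) (simp add: mk)
    qed
    have "[p ^ ((b - 1) div 2) * k ^ ((b - 1) div 2) = 1 * 1] (mod b)" using A B by (rule cong_mult)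
    then show ?thesis by (simp add: mk power_mult_distrib)
  qed
qed
lemma two_nonres:
  assumes pb: "prime (b::nat)" and b8: "b mod 8 = 5"
  shows "[2 ^ ((b - 1) div 2) = -1] (mod int b)"
proof -
  obtain k where bk: "b = 8*k+5" using b8 by (metis mod_div_mult_eq add.commute mult.commute)
  have b2: "2 < b" using bk by simp
  interpret G: GAUSS b 2
  proof
    show "prime b" by (rule pb)
    show "2 < b" by (rule b2)
    show "(0::int) < 2" by simp
    show "\<not> [2 = 0] (mod int b)"
    proof
      assume "[2 = 0] (mod int b)"
      then have "int b dvd 2" by (simp add: cong_0_iff)
      then have "int b \<le> 2" by (rule zdvd_imp_le) simp
      with b2 show False by simp
    qed
  qed
  have h: "(int b - 1) div 2 = 4*int k+2" using bk by simp
  have C: "G.C = (\<lambda>x. x*2) ` {0<..4*int k+2}"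
  proof -
    have "G.C = (\<lambda>x. x mod int b) ` ((\<lambda>x. x*2) ` {0<..4*int k+2})"
      unfolding G.C_def G.B_def G.A_def h by simp
    also have "\<dots> = (\<lambda>x. x*2) ` {0<..4*int k+2}"
      unfolding image_image
      by (rule image_cong) (auto simp: bk)
    finally show ?thesis .
  qed
  have E: "G.E = (\<lambda>x. x*2) ` {2*int k+2..4*int k+2}"
    unfolding G.E_def C h by (auto simp: image_iff)
  have cE: "card G.E = 2*k+1"
    unfolding E by (subst card_image) (auto simp: inj_on_def)
  have "Legendre 2 (int b) = -1"
    using G.gauss_lemma cE by simp
  moreover have "[Legendre 2 (int b) = 2 ^ ((b - 1) div 2)] (mod int b)"
    using euler_criterion[OF pb b2] by simp
  ultimately show ?thesis by (simp add: cong_sym)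
qed

lemma lemFinal:
  fixes b d m :: nat
  assumes pb: "prime b" and b8: "b mod 8 = 5" and od: "odd d" and m0: "m > 0" and om: "odd m"
    and cp: "coprime m b" and cg: "[b ^ d = 1] (mod m)"
    and mm: "[int m = 2] (mod int b) \<or> [int m = -2] (mod int b)"
  shows False
proof -
  have b2: "2 < b" using pb b8 prime_ge_2_nat[OF pb] by presburger
  have b4: "b mod 4 = 1" using b8 by presburger
  have ev: "even ((b - 1) div 2)" using b4 by presburger
  have "[m ^ ((b - 1) div 2) = 1] (mod b)" by (rule lemM[OF pb b2 b4 od m0 om cp cg])
  then have A: "[int m ^ ((b - 1) div 2) = 1] (mod int b)" by (metis cong_int_iff of_nat_power of_nat_1)
  have "[int m ^ ((b - 1) div 2) = 2 ^ ((b - 1) div 2)] (mod int b)"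
    using mm
  proof
    assume "[int m = 2] (mod int b)"
    then show ?thesis by (rule cong_pow)
  next
    assume "[int m = -2] (mod int b)"
    then have "[int m ^ ((b - 1) div 2) = (-2) ^ ((b - 1) div 2)] (mod int b)" by (rule cong_pow)
    moreover have "(-2::int) ^ ((b - 1) div 2) = 2 ^ ((b - 1) div 2)" using ev by simp
    ultimately show ?thesis by simp
  qed
  then have "[1 = 2 ^ ((b - 1) div 2)] (mod int b)" using A by (metis cong_sym cong_trans)
  then have "[1 = -1] (mod int b)" using two_nonres[OF pb b8] by (rule cong_trans)
  then have "int b dvd 2" by (simp add: cong_iff_dvd_diff)
  then have "int b \<le> 2" by (rule zdvd_imp_le) simp
  with b2 show False by simp
qed

lemma lemZ:
  fixes b x1 y1 y2 :: nat
  assumes pb: "prime b" and b8: "b mod 8 = 5" and ex: "even x1" and x4: "x1 \<ge> 4"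
    and ey: "even y1" and y1p: "y1 > 0" and oy: "odd y2"
    and eq: "2 ^ x1 + b ^ y1 = 4 + b ^ y2"
  shows False
proof -
  have b5: "b \<ge> 5" using b8 prime_ge_2_nat[OF pb] by presburger
  have lt: "y1 < y2"
  proof (rule ccontr)
    assume "\<not> y1 < y2"
    then have "b ^ y2 \<le> b ^ y1" using b5 by (intro power_increasing) auto
    moreover have "(2::nat) ^ 4 \<le> 2 ^ x1" using x4 by (intro power_increasing) auto
    ultimately show False using eq by simp
  qed
  define d where "d = y2 - y1"
  have od: "odd d" unfolding d_def using lt ey oy by presburger
  have by2: "b ^ y2 = b ^ y1 * b ^ d" unfolding d_def using lt by (simp add: power_add[symmetric])
  obtain t where xt: "x1 = 2 * t" using ex by (rule evenE)
  have t2: "t \<ge> 2" using xt x4 by simp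
  define u where "u = (2::nat) ^ (t - 1)"
  have tu: "(2::nat) ^ t = 2 * u" unfolding u_def using t2 by (cases t) auto
  have "(2::nat) ^ x1 = (2 ^ t) ^ 2" by (simp add: xt power_mult[symmetric] mult.commute)
  then have u2: "(2::nat) ^ x1 = 4 * u ^ 2" using tu by (simp add: power2_eq_square)
  have ue: "even u" unfolding u_def using t2 by simp
  have "(2::nat) ^ 1 \<le> 2 ^ (t - 1)" using t2 by (intro power_increasing) auto
  then have uge: "u \<ge> 2" unfolding u_def by simp
  have bd1: "b ^ d \<ge> 1" using b5 by simp
  have key: "b ^ y1 * (b ^ d - 1) = 4 * ((u - 1) * (u + 1))"
  proof -
    have e1: "4 * u ^ 2 + b ^ y1 = 4 + b ^ y1 * b ^ d" using eq u2 by2 by simp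
    have "(u - 1) * (u + 1) = u ^ 2 - 1" using uge by (simp add: power2_eq_square algebra_simps)
    moreover have "b ^ y1 * (b ^ d - 1) = b ^ y1 * b ^ d - b ^ y1" by (simp add: right_diff_distrib')
    ultimately show ?thesis using e1 uge by (simp add: right_diff_distrib')
  qed
  have "b dvd b ^ y1" using y1p by simp
  then have "b dvd 4 * ((u - 1) * (u + 1))" using key by (metis dvd_mult2)
  moreover have "\<not> b dvd 4"
  proof
    assume "b dvd 4" then have "b \<le> 4" by (rule dvd_imp_le) simp
    with b5 show False by simp
  qed
  ultimately have "b dvd (u - 1) * (u + 1)" using prime_dvd_mult_iff[OF pb, of 4 "(u - 1) * (u + 1)"] by blast
  then have cases: "b dvd u - 1 \<or> b dvd u + 1" using prime_dvd_mult_iff[OF pb, of "u - 1" "u + 1"] by blast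
  have gen: "m dvd (u - 1) * (u + 1) \<Longrightarrow> \<not> b dvd m \<Longrightarrow> [b ^ d = 1] (mod m)" for m
  proof -
    assume md: "m dvd (u - 1) * (u + 1)" and nb: "\<not> b dvd m"
    have "coprime b m" by (rule prime_imp_coprime[OF pb nb])
    then have "coprime m (b ^ y1)" by (simp add: coprime_commute)
    moreover have "m dvd b ^ y1 * (b ^ d - 1)" using md key by (metis dvd_mult2 mult.commute)
    ultimately have "m dvd b ^ d - 1" by (simp add: coprime_dvd_mult_right_iff)
    then show ?thesis using bd1 by (simp add: cong_altdef_nat)
  qed
  from cases show False
  proof
    assume h: "b dvd u - 1"
    have nb: "\<not> b dvd u + 1"
    proof
      assume "b dvd u + 1"
      then have "b dvd (u + 1) - (u - 1)" using h by (rule dvd_diff_nat)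
      moreover have "(u + 1) - (u - 1) = 2" using uge by simp
      ultimately have "b dvd 2" by simp
      then have "b \<le> 2" by (rule dvd_imp_le) simp
      with b5 show False by simp
    qed
    have cg: "[b ^ d = 1] (mod u + 1)" by (rule gen[OF _ nb]) (rule dvd_triv_right)
    have cp: "coprime (u + 1) b" using prime_imp_coprime[OF pb nb] by (simp add: coprime_commute)
    have "int b dvd int (u - 1)" using h by (simp only: int_dvd_int_iff)
    moreover have "int (u + 1) - 2 = int (u - 1)" using uge by simp
    ultimately have mm: "[int (u + 1) = 2] (mod int b)" by (simp only: cong_iff_dvd_diff)
    have p1: "u + 1 > 0" by simp
    have p2: "odd (u + 1)" using ue by simp
    show False using lemFinal[OF pb b8 od p1 p2 cp cg disjI1[OF mm]] .
  next
    assume h: "b dvd u + 1"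
    have nb: "\<not> b dvd u - 1"
    proof
      assume "b dvd u - 1"
      then have "b dvd (u + 1) - (u - 1)" by (rule dvd_diff_nat[OF h])
      moreover have "(u + 1) - (u - 1) = 2" using uge by simp
      ultimately have "b dvd 2" by simp
      then have "b \<le> 2" by (rule dvd_imp_le) simp
      with b5 show False by simp
    qed
    have cg: "[b ^ d = 1] (mod u - 1)" by (rule gen[OF _ nb]) (rule dvd_triv_left)
    have cp: "coprime (u - 1) b" using prime_imp_coprime[OF pb nb] by (simp add: coprime_commute)
    have "int b dvd int (u + 1)" using h by (simp only: int_dvd_int_iff)
    moreover have "int (u - 1) - (-2) = int (u + 1)" using uge by simp
    ultimately have mm: "[int (u - 1) = -2] (mod int b)" by (simp only: cong_iff_dvd_diff)
    have p1: "u - 1 > 0" using uge by simp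
    have p2: "odd (u - 1)" using ue uge by simp
    show False using lemFinal[OF pb b8 od p1 p2 cp cg disjI2[OF mm]] .
  qed
qed

lemma pow_mod_const:
  fixes b m r :: nat
  assumes "b mod m = r" "r ^ 2 mod m = 1"
  shows "b ^ (2 * k) mod m = 1"
proof (induction k)
  case 0
  have "m \<noteq> 1" using assms(2) by auto
  then show ?case by simp
next
  case (Suc k)
  have m1: "m \<noteq> 1" using assms(2) by auto
  have e: "b ^ (2 * Suc k) = b ^ (2 * k) * b ^ 2" by (simp add: power_add[symmetric])
  have "b ^ 2 mod m = (b mod m) ^ 2 mod m" by (simp add: power_mod)
  then have b2: "b ^ 2 mod m = 1" using assms by simp
  have "b ^ (2 * Suc k) mod m = ((b ^ (2 * k) mod m) * (b ^ 2 mod m)) mod m"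
    by (simp only: e mod_mult_eq)
  then show ?case using Suc b2 m1 by simp
qed

lemma pow8e:
  assumes "(b::nat) mod 8 = 5" "even y" shows "b ^ y mod 8 = 1"
proof -
  obtain k where "y = 2 * k" using assms(2) by (rule evenE)
  then show ?thesis using pow_mod_const[of b 8 5 k] assms(1) by simp
qed

lemma pow8o: "(b::nat) mod 8 = 5 \<Longrightarrow> odd y \<Longrightarrow> b ^ y mod 8 = 5"
proof -
  assume b: "b mod 8 = 5" and y: "odd y"
  obtain k where k: "y = 2 * k + 1" using y by (rule oddE)
  have "b ^ (2 * k) mod 8 = 1" using pow_mod_const[of b 8 5 k] b by simp
  have e: "b ^ y = b ^ (2 * k) * b" unfolding k by simp
  have "b ^ y mod 8 = ((b ^ (2 * k) mod 8) * (b mod 8)) mod 8"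
    by (simp only: e mod_mult_eq)
  then show ?thesis using b \<open>b ^ (2 * k) mod 8 = 1\<close> by simp
qed

lemma two_pow8: "(2::nat) ^ x mod 8 = 4 \<Longrightarrow> x = 2"
proof -
  assume h: "(2::nat) ^ x mod 8 = 4"
  have "x \<noteq> 0" "x \<noteq> 1" "\<not> x \<ge> 3" 
  proof -
    show "x \<noteq> 0"
    proof
      assume "x = 0" with h show False by simp
    qed
    show "x \<noteq> 1" using h by auto
    show "\<not> x \<ge> 3"
    proof
      assume "x \<ge> 3"
      then have "(2::nat) ^ x = 2 ^ 3 * 2 ^ (x - 3)" using power_add[of "2::nat" 3 "x - 3"] by simp
      then have "(2::nat) ^ x mod 8 = 0" by simp
      with h show False by simp
    qed
  qed
  then show ?thesis by linarith
qed

lemma two_pow8_0: "(2::nat) ^ x mod 8 = 0 \<Longrightarrow> x \<ge> 3"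
proof (rule ccontr)
  assume h: "(2::nat) ^ x mod 8 = 0" "\<not> x \<ge> 3"
  then have "x = 0 \<or> x = 1 \<or> x = 2" by linarith
  then show False using h by auto
qed

lemma modsub:
  fixes A B C s t m :: nat
  assumes "A + B = C" "[B = s] (mod m)" "[C = t + s] (mod m)" shows "[A = t] (mod m)"
proof -
  have "[A + B = A + s] (mod m)" by (rule cong_add[OF cong_refl assms(2)])
  then have "[A + s = t + s] (mod m)" using assms(1,3) by (metis cong_sym cong_trans)
  then show ?thesis by (simp only: cong_add_rcancel_nat)
qed
lemma t1:
  fixes A B c :: nat
  assumes "A + B = c" "B mod 8 = 1" "c mod 8 = 5" shows "A mod 8 = 4"
  using modsub[of A B c 1 8 4] assms by (simp add: cong_def)
lemma t2:
  fixes A B c :: nat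
  assumes "A + B = c" "B mod 8 = 5" "c mod 8 = 1" shows "A mod 8 = 4"
  using modsub[of A B c 5 8 4] assms by (simp add: cong_def)
lemma t3:
  fixes A B c :: nat
  assumes "A + B = c" "B mod 8 = 1" "c mod 8 = 1" shows "A mod 8 = 0"
  using modsub[of A B c 1 8 0] assms by (simp add: cong_def)
lemma t4:
  fixes B C :: nat
  assumes "4 + B = C" "B mod 3 = 1" "C mod 3 = 1" shows False
proof -
  have "[4 = (0::nat)] (mod 3)" using modsub[of 4 B C 1 3 0] assms by (simp add: cong_def)
  then show False by (simp add: cong_def)
qed
lemma m24:
  fixes x r :: nat
  assumes "x mod 24 = r"
  shows "x mod 8 = r mod 8" "x mod 3 = r mod 3" "x mod 2 = r mod 2" "r \<le> x"
proof -
  show "x mod 8 = r mod 8" using assms mod_mod_cancel[of 8 24 x] by simp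
  show "x mod 3 = r mod 3" using assms mod_mod_cancel[of 3 24 x] by simp
  show "x mod 2 = r mod 2" using assms mod_mod_cancel[of 2 24 x] by simp
  show "r \<le> x" using assms by (metis mod_less_eq_dividend)
qed

lemma oddodd: "odd (A::nat) \<Longrightarrow> odd B \<Longrightarrow> even (A + B)"
  by presburger


theorem mainTheorem10:
  fixes a b c x1 y1 z1 x2 y2 z2 :: nat
  assumes "prime a" and "prime b" and "prime c"
    and "a \<noteq> b" and "a \<noteq> c" and "b \<noteq> c" and "a < b"
    and "N a b c > 1"
    and "(a, b, c) \<notin> {(2,3,5), (2,3,11), (2,5,3), (2,7,3), (3,5,2), (3,13,2)}"
    and "sols a b c = {(x1, y1, z1), (x2, y2, z2)}"
    and "(x1, y1, z1) \<noteq> (x2, y2, z2)"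
    and "2 dvd x1" and "2 dvd y1" and "z1 = 1" and "\<not> 2 dvd y2"
    and "b mod 24 = 13"
  shows "(c mod 24 = 5 \<longrightarrow> x1 = 2) \<and>
         (c mod 24 = 17 \<longrightarrow> x2 = 2 \<and> 4 + b ^ y2 = c ^ z2 \<and> odd y2 \<and> y2 > 1 \<and> odd z2 \<and> z2 > 1)"
proof -
  have "(x1, y1, z1) \<in> sols a b c" using assms(10) by (rule ssubst) (rule insertI1)
  then have s1a: "x1 > 0 \<and> y1 > 0 \<and> z1 > 0 \<and> a ^ x1 + b ^ y1 = c ^ z1"
    by (simp only: sols_def mem_Collect_eq prod.case)
  then have s1: "x1 > 0" "y1 > 0" "a ^ x1 + b ^ y1 = c"
    by (simp_all only: assms(14) power_one_right)
  have "(x2, y2, z2) \<in> sols a b c" using assms(10) by (rule ssubst) (rule insertI2, rule insertI1)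
  then have s2a: "x2 > 0 \<and> y2 > 0 \<and> z2 > 0 \<and> a ^ x2 + b ^ y2 = c ^ z2"
    by (simp only: sols_def mem_Collect_eq prod.case)
  then have s2: "x2 > 0" "y2 > 0" "z2 > 0" "a ^ x2 + b ^ y2 = c ^ z2" by simp_all
  note bm = m24[OF assms(16)]
  have b8: "b mod 8 = 5" using bm(1) by simp
  have b3: "b mod 3 = 1" using bm(2) by simp
  have ob: "odd b" using bm(3) by (simp add: odd_iff_mod_2_eq_one)
  have b13: "b \<ge> 13" using bm(4) by simp
  have ey1: "even y1" using assms(13) by simp
  have oy2: "odd y2" using assms(15) by simp
  have ex1: "even x1" using assms(12) by simp
  have a2: "a = 2" if oc: "odd c"
  proof -
    have "even a"
    proof (rule ccontr)
      assume "odd a"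
      then have "odd (a ^ x1)" by simp
      moreover have "odd (b ^ y1)" using ob by simp
      ultimately have "even (a ^ x1 + b ^ y1)" by (rule oddodd)
      then have "even c" using s1(3) by simp
      with oc show False by simp
    qed
    then have "2 dvd a" by simp
    then show "a = 2" using primes_dvd_imp_eq[of 2 a] assms(1) by simp
  qed
  have by1: "b ^ y1 mod 8 = 1" using pow8e[OF b8 ey1] .
  have part1: "c mod 24 = 5 \<longrightarrow> x1 = 2"
  proof
    assume c: "c mod 24 = 5"
    note cm = m24[OF c]
    have "odd c" using cm(3) by (simp add: odd_iff_mod_2_eq_one)
    then have "a = 2" by (rule a2)
    have c8: "c mod 8 = 5" using cm(1) by simp
    have "2 ^ x1 + b ^ y1 = c" using s1(3) by (simp only: \<open>a = 2\<close>)
    from t1[OF this by1 c8] have "(2::nat) ^ x1 mod 8 = 4" .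
    then show "x1 = 2" by (rule two_pow8)
  qed
  have part2: "c mod 24 = 17 \<longrightarrow> x2 = 2 \<and> 4 + b ^ y2 = c ^ z2 \<and> odd y2 \<and> y2 > 1 \<and> odd z2 \<and> z2 > 1"
  proof
    assume c: "c mod 24 = 17"
    note cm = m24[OF c]
    have "odd c" using cm(3) by (simp add: odd_iff_mod_2_eq_one)
    then have aa: "a = 2" by (rule a2)
    have c8: "c mod 8 = 1" using cm(1) by simp
    have c3: "c mod 3 = 2" using cm(2) by simp
    have "c ^ z2 mod 8 = (c mod 8) ^ z2 mod 8" by (simp add: power_mod)
    then have cz8: "c ^ z2 mod 8 = 1" using c8 by simp
    have "2 ^ x2 + b ^ y2 = c ^ z2" using s2(4) by (simp only: aa)
    from t2[OF this pow8o[OF b8 oy2] cz8] have "(2::nat) ^ x2 mod 8 = 4" .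
    then have x2: "x2 = 2" by (rule two_pow8)
    have e2: "4 + b ^ y2 = c ^ z2" using s2(4) aa x2 by simp
    have e1: "2 ^ x1 + b ^ y1 = c" using s1(3) by (simp only: aa)
    have y2gt: "y2 > 1"
    proof (rule ccontr)
      assume "\<not> y2 > 1"
      then have "y2 = 1" using s2(2) by simp
      then have "4 + b = c ^ z2" using e2 by simp
      moreover have "c \<le> c ^ z2"
      proof -
        have "1 \<le> c" using \<open>odd c\<close> by (cases c) auto
        then show ?thesis using s2(3) by (rule self_le_power)
      qed
      moreover have "b ^ 2 \<le> b ^ y1" using ey1 s1(2) b13 by (intro power_increasing) (auto elim!: evenE)
      moreover have "b + 4 < b ^ 2"
      proof -
        have "13 * b \<le> b * b" using b13 by (rule mult_le_mono1)
        then have "b + 4 < b * b" using b13 by linarith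
        then show ?thesis by (simp add: power2_eq_square)
      qed
      ultimately show False using e1 by linarith
    qed
    have oz: "odd z2"
    proof
      assume "even z2"
      then obtain k where k: "z2 = 2 * k" by (rule evenE)
      have "c ^ 2 mod 3 = (c mod 3) ^ 2 mod 3" by (simp add: power_mod)
      then have "(c::nat) ^ 2 mod 3 = 1" using c3 by simp
      have "c ^ z2 = (c ^ 2) ^ k" using k by (simp add: power_mult)
      then have "c ^ z2 mod 3 = ((c ^ 2) mod 3) ^ k mod 3" by (simp add: power_mod)
      then have "c ^ z2 mod 3 = 1" using \<open>c ^ 2 mod 3 = 1\<close> by simp
      moreover have "b ^ y2 mod 3 = (b mod 3) ^ y2 mod 3" by (simp add: power_mod)
      then have "b ^ y2 mod 3 = 1" using b3 by simp
      ultimately show False using t4[OF e2] by blast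
    qed
    have z2gt: "z2 > 1"
    proof (rule ccontr)
      assume "\<not> z2 > 1"
      then have "z2 = 1" using s2(3) by simp
      then have eq: "2 ^ x1 + b ^ y1 = 4 + b ^ y2" using e1 e2 by simp
      from t3[OF e1 by1 c8] have "(2::nat) ^ x1 mod 8 = 0" .
      then have "x1 \<ge> 3" by (rule two_pow8_0)
      then have x4: "x1 \<ge> 4" using ex1 by presburger
      show False by (rule lemZ[OF assms(2) b8 ex1 x4 ey1 s1(2) oy2 eq])
    qed
    show "x2 = 2 \<and> 4 + b ^ y2 = c ^ z2 \<and> odd y2 \<and> y2 > 1 \<and> odd z2 \<and> z2 > 1"
      using x2 e2 oy2 y2gt oz z2gt by simp
  qed
  show ?thesis using part1 part2 by simp
qed

end
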